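(* For integers $k\ge2$, let $F_k$ be the non-abelian free group of rank $k$. Then the true prosoluble completions $P\mathcal{S}(F_k)$, $k\ge 2$, are pairwise non-isomorphic (as topological groups).
   Context: For a group $\Gamma$, the true prosoluble completion $P\mathcal{S}(\Gamma)$ is the completion of $\Gamma/\bigcap N$ for the topology whose basis of neighbourhoods of the identity consists of the images of the normal subgroups $N$ of $\Gamma$ with $\Gamma/N$ soluble; equivalently it is the inverse limit $\varprojlim\Gamma/N$ over such $N$, with the inverse limit topology. *)

theory Defs
  imports "HOL-Analysis.Analysis" "HOL-Algebra.Algebra"
begin

text \<open>Letters are pairs (i, b): generator x_i (b = True) or its inverse (b = False).\<close>

definition letter_inv :: "nat \<times> bool \<Rightarrow> nat \<times> bool" where
  "letter_inv x = (fst x, \<not> snd x)"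

fun red_cons :: "nat \<times> bool \<Rightarrow> (nat \<times> bool) list \<Rightarrow> (nat \<times> bool) list" where
  "red_cons x [] = [x]"
| "red_cons x (y # ys) = (if y = letter_inv x then ys else x # y # ys)"

definition reduce :: "(nat \<times> bool) list \<Rightarrow> (nat \<times> bool) list" where
  "reduce xs = foldr red_cons xs []"

fun is_reduced :: "(nat \<times> bool) list \<Rightarrow> bool" where
  "is_reduced [] = True"
| "is_reduced [x] = True"
| "is_reduced (x # y # ys) = (y \<noteq> letter_inv x \<and> is_reduced (y # ys))"

definition free_group :: "nat \<Rightarrow> (nat \<times> bool) list monoid" where
  "free_group k = \<lparr> carrier = {w. fst ` set w \<subseteq> {..<k} \<and> is_reduced w},
                    mult = (\<lambda>u v. reduce (u @ v)),
                    one = [] \<rparr>"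

definition sol_quot_index :: "('a, 'b) monoid_scheme \<Rightarrow> 'a set set" where
  "sol_quot_index \<Gamma> = {N. N \<lhd> \<Gamma> \<and> solvable (\<Gamma> Mod N)}"

text \<open>Inverse limit of the quotients \<Gamma>/N: compatible families of cosets
  (for N \<subseteq> M the coset at N maps to, i.e. is contained in, the coset at M).\<close>
definition PS_carrier :: "('a, 'b) monoid_scheme \<Rightarrow> ('a set \<Rightarrow> 'a set) set" where
  "PS_carrier \<Gamma> = {f \<in> (\<Pi>\<^sub>E N\<in>sol_quot_index \<Gamma>. carrier (\<Gamma> Mod N)).
      \<forall>N\<in>sol_quot_index \<Gamma>. \<forall>M\<in>sol_quot_index \<Gamma>. N \<subseteq> M \<longrightarrow> f N \<subseteq> f M}"

definition PS_group :: "('a, 'b) monoid_scheme \<Rightarrow> ('a set \<Rightarrow> 'a set) monoid" where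
  "PS_group \<Gamma> = \<lparr> carrier = PS_carrier \<Gamma>,
      mult = (\<lambda>f g. \<lambda>N\<in>sol_quot_index \<Gamma>. f N \<otimes>\<^bsub>\<Gamma> Mod N\<^esub> g N),
      one = (\<lambda>N\<in>sol_quot_index \<Gamma>. \<one>\<^bsub>\<Gamma> Mod N\<^esub>) \<rparr>"

definition PS_topology :: "('a, 'b) monoid_scheme \<Rightarrow> ('a set \<Rightarrow> 'a set) topology" where
  "PS_topology \<Gamma> = subtopology
      (product_topology (\<lambda>N. discrete_topology (carrier (\<Gamma> Mod N))) (sol_quot_index \<Gamma>))
      (PS_carrier \<Gamma>)"

definition top_group_iso ::
  "('a, 'c) monoid_scheme \<Rightarrow> 'a topology \<Rightarrow> ('b, 'd) monoid_scheme \<Rightarrow> 'b topology \<Rightarrow> bool" where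
  "top_group_iso G T1 H T2 \<longleftrightarrow> (\<exists>h. h \<in> iso G H \<and> homeomorphic_map T1 T2 h)"

end

theory Submission
  imports Defs
begin


lemma letter_inv_inv[simp]: "letter_inv (letter_inv x) = x"
  by (simp add: letter_inv_def)

lemma fst_letter_inv[simp]: "fst (letter_inv x) = fst x"
  by (simp add: letter_inv_def)

lemma is_reduced_tl: "is_reduced (y # ys) \<Longrightarrow> is_reduced ys"
  by (cases ys) auto

lemma red_cons_reduced: "is_reduced ys \<Longrightarrow> is_reduced (red_cons x ys)"
  by (cases ys) (auto dest: is_reduced_tl)

lemma foldr_reduced: "is_reduced acc \<Longrightarrow> is_reduced (foldr red_cons xs acc)"
  by (induction xs) (auto intro: red_cons_reduced)

lemma reduce_reduced: "is_reduced (reduce xs)"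
  unfolding reduce_def by (rule foldr_reduced) simp

lemma red_cons_id: "is_reduced (x # ys) \<Longrightarrow> red_cons x ys = x # ys"
  by (cases ys) auto

lemma reduce_id: "is_reduced xs \<Longrightarrow> reduce xs = xs"
proof (induction xs)
  case Nil then show ?case by (simp add: reduce_def)
next
  case (Cons x xs)
  have "reduce (x # xs) = red_cons x (reduce xs)" by (simp add: reduce_def)
  also have "\<dots> = red_cons x xs" using Cons is_reduced_tl by metis
  also have "\<dots> = x # xs" using Cons.prems by (rule red_cons_id)
  finally show ?case .
qed

lemma red_cons_cancel: "is_reduced ys \<Longrightarrow> red_cons x (red_cons (letter_inv x) ys) = ys"
proof (cases ys)
  case Nil then show ?thesis by simp
next
  case (Cons y ys')
  assume r: "is_reduced ys"
  show ?thesis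
  proof (cases "y = x")
    case True
    then have "red_cons (letter_inv x) ys = ys'" using Cons by simp
    moreover have "red_cons x ys' = x # ys'" using r Cons True by (intro red_cons_id) simp
    ultimately show ?thesis using Cons True by simp
  next
    case False
    then have "y \<noteq> letter_inv (letter_inv x)" by simp
    then show ?thesis using Cons by simp
  qed
qed

lemma foldr_step: "is_reduced acc \<Longrightarrow>
   foldr red_cons (red_cons x ys) acc = red_cons x (foldr red_cons ys acc)"
proof (cases ys)
  case (Cons y ys')
  assume r: "is_reduced acc"
  show ?thesis
  proof (cases "y = letter_inv x")
    case True
    have "red_cons x (red_cons (letter_inv x) (foldr red_cons ys' acc)) = foldr red_cons ys' acc"
      by (rule red_cons_cancel) (rule foldr_reduced[OF r])
    then show ?thesis using Cons True by simp
  qed (use Cons in simp)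
qed simp

lemma foldr_assoc: "is_reduced acc \<Longrightarrow>
   foldr red_cons (foldr red_cons u v) acc = foldr red_cons u (foldr red_cons v acc)"
  by (induction u) (simp_all add: foldr_step)

lemma reduce_append: "reduce (u @ v) = foldr red_cons u (reduce v)"
  by (simp add: reduce_def)

lemma fst_red_cons: "fst ` set (red_cons x ys) \<subseteq> insert (fst x) (fst ` set ys)"
  by (cases ys) auto

lemma fst_foldr: "fst ` set (foldr red_cons u v) \<subseteq> fst ` set u \<union> fst ` set v"
proof (induction u)
  case (Cons x u)
  have "fst ` set (red_cons x (foldr red_cons u v)) \<subseteq> insert (fst x) (fst ` set u \<union> fst ` set v)"
    using Cons fst_red_cons[of x "foldr red_cons u v"] by blast
  then show ?case by auto
qed simp

lemma fst_reduce: "fst ` set (reduce u) \<subseteq> fst ` set u"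
  using fst_foldr[of u "[]"] by (simp add: reduce_def)

lemma inv_cancel: "foldr red_cons (rev (map letter_inv w)) w = []"
proof (induction w)
  case (Cons x w)
  have "red_cons (letter_inv x) (x # w) = w"
    by (metis letter_inv_inv red_cons.simps(2))
  then show ?case using Cons by simp
qed simp

lemma free_group_carrier: "carrier (free_group k) = {w. fst ` set w \<subseteq> {..<k} \<and> is_reduced w}"
  by (simp add: free_group_def)

lemma free_group_mult: "u \<otimes>\<^bsub>free_group k\<^esub> v = reduce (u @ v)"
  by (simp add: free_group_def)

lemma free_group_one: "\<one>\<^bsub>free_group k\<^esub> = []"
  by (simp add: free_group_def)

lemma group_free_group: "group (free_group k)"
proof (rule groupI)
  fix x y assume "x \<in> carrier (free_group k)" "y \<in> carrier (free_group k)"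
  then have "fst ` set (x @ y) \<subseteq> {..<k}" by (auto simp: free_group_carrier)
  then have "fst ` set (reduce (x @ y)) \<subseteq> {..<k}" by (rule subset_trans[OF fst_reduce])
  then show "x \<otimes>\<^bsub>free_group k\<^esub> y \<in> carrier (free_group k)"
    using reduce_reduced[of "x @ y"]
    by (auto simp: free_group_carrier free_group_mult)
next
  show "\<one>\<^bsub>free_group k\<^esub> \<in> carrier (free_group k)"
    by (simp add: free_group_carrier free_group_one)
next
  fix x y z assume "x \<in> carrier (free_group k)" "y \<in> carrier (free_group k)" "z \<in> carrier (free_group k)"
  then have r: "is_reduced x" "is_reduced y" "is_reduced z" by (auto simp: free_group_carrier)
  have "reduce (reduce (x @ y) @ z) = foldr red_cons (foldr red_cons x y) z"
    using r by (simp add: reduce_append reduce_id)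
  also have "\<dots> = foldr red_cons x (foldr red_cons y z)" using r by (simp add: foldr_assoc)
  also have "\<dots> = reduce (x @ reduce (y @ z))"
    using r by (simp add: reduce_append reduce_id foldr_reduced)
  finally show "x \<otimes>\<^bsub>free_group k\<^esub> y \<otimes>\<^bsub>free_group k\<^esub> z =
      x \<otimes>\<^bsub>free_group k\<^esub> (y \<otimes>\<^bsub>free_group k\<^esub> z)" by (simp add: free_group_mult)
next
  fix x assume "x \<in> carrier (free_group k)"
  then show "\<one>\<^bsub>free_group k\<^esub> \<otimes>\<^bsub>free_group k\<^esub> x = x"
    by (simp add: free_group_carrier free_group_mult free_group_one reduce_id)
next
  fix x assume x: "x \<in> carrier (free_group k)"
  define y where "y = reduce (rev (map letter_inv x))"
  have "fst ` set (rev (map letter_inv x)) \<subseteq> {..<k}"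
    using x by (auto simp: free_group_carrier image_image)
  then have "fst ` set y \<subseteq> {..<k}" unfolding y_def by (rule subset_trans[OF fst_reduce])
  then have "y \<in> carrier (free_group k)"
    using reduce_reduced
    by (auto simp: free_group_carrier y_def)
  moreover have "y \<otimes>\<^bsub>free_group k\<^esub> x = \<one>\<^bsub>free_group k\<^esub>"
  proof -
    have rx: "is_reduced x" using x by (simp add: free_group_carrier)
    have "reduce (y @ x) = foldr red_cons (foldr red_cons (rev (map letter_inv x)) []) x"
      using rx by (simp add: reduce_append reduce_id y_def, simp add: reduce_def)
    also have "\<dots> = foldr red_cons (rev (map letter_inv x)) x"
      using rx by (simp add: foldr_assoc)
    also have "\<dots> = []" by (rule inv_cancel)
    finally show ?thesis by (simp add: free_group_mult free_group_one)
  qed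
  ultimately show "\<exists>y\<in>carrier (free_group k). y \<otimes>\<^bsub>free_group k\<^esub> x = \<one>\<^bsub>free_group k\<^esub>"
    by blast
qed



definition boolG :: "bool monoid" where
  "boolG = \<lparr> carrier = UNIV, mult = (\<lambda>a b. a \<noteq> b), one = False \<rparr>"

lemma boolG_simps[simp]: "carrier boolG = UNIV" "a \<otimes>\<^bsub>boolG\<^esub> b = (a \<noteq> b)" "\<one>\<^bsub>boolG\<^esub> = False"
  by (simp_all add: boolG_def)

lemma group_boolG: "group boolG"
  by (rule groupI) auto

lemma inv_boolG[simp]: "inv\<^bsub>boolG\<^esub> a = a"
  using group.inv_equality[OF group_boolG, of a a] by simp

fun chi :: "(nat \<Rightarrow> bool) \<Rightarrow> (nat \<times> bool) list \<Rightarrow> bool" where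
  "chi c [] = False"
| "chi c (x # xs) = (c (fst x) \<noteq> chi c xs)"

lemma chi_red_cons: "chi c (red_cons x ys) = (c (fst x) \<noteq> chi c ys)"
  by (cases ys) auto

lemma chi_foldr: "chi c (foldr red_cons u v) = (chi c u \<noteq> chi c v)"
  by (induction u) (auto simp: chi_red_cons)

lemma chi_reduce: "chi c (reduce v) = chi c v"
  using chi_foldr[of c v "[]"] by (simp add: reduce_def)

lemma chi_hom: "chi c \<in> hom (free_group k) boolG"
  by (rule homI) (auto simp: free_group_mult reduce_append chi_foldr chi_reduce)

lemma chi_cong: "(\<And>i. i \<in> fst ` set w \<Longrightarrow> c i = c' i) \<Longrightarrow> chi c w = chi c' w"
  by (induction w) auto

lemma hom_gen_det:
  assumes psi: "psi \<in> hom (free_group k) boolG" and w: "w \<in> carrier (free_group k)"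
  shows "psi w = chi (\<lambda>i. psi [(i, True)]) w"
  using w
proof (induction w)
  case Nil
  have "[] \<in> carrier (free_group k)" by (simp add: free_group_carrier)
  then have "psi ([] \<otimes>\<^bsub>free_group k\<^esub> []) = (psi [] \<noteq> psi [])"
    using psi by (simp add: hom_mult)
  then show ?case by (simp add: free_group_mult reduce_def)
next
  case (Cons x w)
  have xk: "fst x < k" and rw: "is_reduced (x # w)" using Cons.prems by (auto simp: free_group_carrier)
  have wc: "w \<in> carrier (free_group k)" using Cons.prems is_reduced_tl[of x w] by (auto simp: free_group_carrier)
  have xc: "[x] \<in> carrier (free_group k)" using xk by (simp add: free_group_carrier)
  have tc: "[(fst x, True)] \<in> carrier (free_group k)" using xk by (simp add: free_group_carrier)
  have "x # w = [x] \<otimes>\<^bsub>free_group k\<^esub> w"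
    using rw is_reduced_tl[OF rw] by (simp add: free_group_mult reduce_id)
  then have e1: "psi (x # w) = (psi [x] \<noteq> psi w)" using psi xc wc by (simp add: hom_mult)
  have e2: "psi [x] = psi [(fst x, True)]"
  proof (cases "snd x")
    case True then show ?thesis by (cases x) simp
  next
    case False
    have "[x] \<otimes>\<^bsub>free_group k\<^esub> [(fst x, True)] = []"
      using False by (cases x) (simp add: free_group_mult reduce_def letter_inv_def)
    moreover have "psi [] = False"
    proof -
      have "[] \<in> carrier (free_group k)" by (simp add: free_group_carrier)
      then have "psi ([] \<otimes>\<^bsub>free_group k\<^esub> []) = (psi [] \<noteq> psi [])"
        using psi by (simp add: hom_mult)
      then show ?thesis by (simp add: free_group_mult reduce_def)
    qed
    ultimately show ?thesis using psi xc tc hom_mult[OF psi xc tc] by auto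
  qed
  show ?case using e1 e2 Cons.IH[OF wc] by simp
qed



definition piPS :: "('a, 'b) monoid_scheme \<Rightarrow> 'a \<Rightarrow> 'a set \<Rightarrow> 'a set" where
  "piPS G w = (\<lambda>N\<in>sol_quot_index G. N #>\<^bsub>G\<^esub> w)"

lemma idx_normal: "N \<in> sol_quot_index G \<Longrightarrow> N \<lhd> G"
  by (simp add: sol_quot_index_def)

lemma carrier_Mod: "carrier (G Mod N) = rcosets\<^bsub>G\<^esub> N"
  by (simp add: FactGroup_def)

lemma topspace_PS: "topspace (PS_topology G) = PS_carrier G"
  by (auto simp: PS_topology_def PS_carrier_def)

lemma carrier_PS: "carrier (PS_group G) = PS_carrier G"
  by (simp add: PS_group_def)

lemma mult_PS: "f \<otimes>\<^bsub>PS_group G\<^esub> g = (\<lambda>N\<in>sol_quot_index G. f N <#>\<^bsub>G\<^esub> g N)"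
  by (simp add: PS_group_def FactGroup_def)

lemma rcos_eq_iff:
  assumes "N \<lhd> G" "a \<in> carrier G"
  shows "(N #>\<^bsub>G\<^esub> a = N) \<longleftrightarrow> a \<in> N"
proof -
  interpret normal N G by fact
  show ?thesis
  proof
    assume "N #>\<^bsub>G\<^esub> a = N"
    then show "a \<in> N" using rcos_self[OF assms(2) subgroup_axioms] by simp
  next
    assume "a \<in> N"
    then show "N #>\<^bsub>G\<^esub> a = N" using rcos_const[OF is_group] by simp
  qed
qed

lemma pi_in:
  assumes "group G" "w \<in> carrier G"
  shows "piPS G w \<in> PS_carrier G"
  unfolding PS_carrier_def piPS_def
proof (intro CollectI conjI ballI impI)
  show "(\<lambda>N\<in>sol_quot_index G. N #>\<^bsub>G\<^esub> w) \<in> (\<Pi>\<^sub>E N\<in>sol_quot_index G. carrier (G Mod N))"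
    using assms by (auto simp: carrier_Mod RCOSETS_def)
next
  fix N M assume "N \<in> sol_quot_index G" "M \<in> sol_quot_index G" "N \<subseteq> M"
  then show "(\<lambda>N\<in>sol_quot_index G. N #>\<^bsub>G\<^esub> w) N \<subseteq> (\<lambda>N\<in>sol_quot_index G. N #>\<^bsub>G\<^esub> w) M"
    by (auto simp: r_coset_def)
qed

lemma pi_mult:
  assumes "u \<in> carrier G" "v \<in> carrier G"
  shows "piPS G (u \<otimes>\<^bsub>G\<^esub> v) = piPS G u \<otimes>\<^bsub>PS_group G\<^esub> piPS G v"
  unfolding mult_PS piPS_def
proof (rule restrict_ext)
  fix N assume "N \<in> sol_quot_index G"
  then have "N \<lhd> G" by (rule idx_normal)
  then show "N #>\<^bsub>G\<^esub> (u \<otimes>\<^bsub>G\<^esub> v) =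
     (\<lambda>N\<in>sol_quot_index G. N #>\<^bsub>G\<^esub> u) N <#>\<^bsub>G\<^esub> (\<lambda>N\<in>sol_quot_index G. N #>\<^bsub>G\<^esub> v) N"
    using normal.rcos_sum[OF _ assms] \<open>N \<in> sol_quot_index G\<close> by simp
qed

lemma PS_mult_closed:
  assumes "f \<in> PS_carrier G" "g \<in> PS_carrier G"
  shows "f \<otimes>\<^bsub>PS_group G\<^esub> g \<in> PS_carrier G"
  unfolding mult_PS PS_carrier_def
proof (intro CollectI conjI ballI impI)
  show "(\<lambda>N\<in>sol_quot_index G. f N <#>\<^bsub>G\<^esub> g N) \<in> (\<Pi>\<^sub>E N\<in>sol_quot_index G. carrier (G Mod N))"
    using assms by (auto simp: carrier_Mod PS_carrier_def intro!: normal.setmult_closed idx_normal)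
next
  fix N M assume "N \<in> sol_quot_index G" "M \<in> sol_quot_index G" "N \<subseteq> M"
  then have "f N \<subseteq> f M" "g N \<subseteq> g M" using assms by (auto simp: PS_carrier_def)
  then show "(\<lambda>N\<in>sol_quot_index G. f N <#>\<^bsub>G\<^esub> g N) N \<subseteq> (\<lambda>N\<in>sol_quot_index G. f N <#>\<^bsub>G\<^esub> g N) M"
    using \<open>N \<in> sol_quot_index G\<close> \<open>M \<in> sol_quot_index G\<close> by (auto simp: set_mult_def)
qed

lemma derived_sub:
  assumes "group G" "subgroup H G"
  shows "(derived G ^^ m) H \<subseteq> H"
proof (induction m)
  case (Suc m)
  have "(derived G ^^ Suc m) H = derived G ((derived G ^^ m) H)" by simp
  also have "\<dots> \<subseteq> (derived G ^^ m) H"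
    using group.derived_incl[OF assms(1) subset_refl group.exp_of_derived_is_subgroup[OF assms]] .
  finally show ?case using Suc by simp
qed simp

lemma solv_iff:
  assumes "group G" "N \<lhd> G"
  shows "solvable (G Mod N) \<longleftrightarrow> (\<exists>n. (derived G ^^ n) (carrier G) \<subseteq> N)"
proof -
  interpret normal N G by fact
  have gh: "group_hom G (G Mod N) (\<lambda>a. N #>\<^bsub>G\<^esub> a)"
    by (simp add: group_hom_def group_hom_axioms_def factorgroup_is_group r_coset_hom_Mod is_group)
  have img: "(\<lambda>a. N #>\<^bsub>G\<^esub> a) ` carrier G = carrier (G Mod N)"
    by (simp add: carrier_FactGroup)
  have "solvable (G Mod N) \<longleftrightarrow> (\<exists>n. (derived (G Mod N) ^^ n) (carrier (G Mod N)) = {\<one>\<^bsub>G Mod N\<^esub>})"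
    by (rule group.solvable_iff_trivial_derived_seq[OF factorgroup_is_group])
  also have "\<dots> \<longleftrightarrow> (\<exists>n. (\<lambda>a. N #>\<^bsub>G\<^esub> a) ` ((derived G ^^ n) (carrier G)) = {N})"
    using group_hom.exp_of_derived_img[OF gh, of "carrier G"] img by simp
  also have "\<dots> \<longleftrightarrow> (\<exists>n. (derived G ^^ n) (carrier G) \<subseteq> N)"
  proof -
    have "(\<lambda>a. N #>\<^bsub>G\<^esub> a) ` D = {N} \<longleftrightarrow> D \<subseteq> N" if "subgroup D G" for D
    proof -
      have "D \<subseteq> carrier G" "\<one>\<^bsub>G\<^esub> \<in> D" using that subgroup.subset subgroup.one_closed by auto
      then show ?thesis using rcos_eq_iff[OF assms(2)] by (auto simp: subset_iff)
    qed
    then show ?thesis using exp_of_derived_is_subgroup[OF subgroup_self] by simp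
  qed
  finally show ?thesis .
qed

lemma idx_carrier: "group G \<Longrightarrow> carrier G \<in> sol_quot_index G"
  unfolding sol_quot_index_def
  using solv_iff[OF _ group.normal_self, of G] group.normal_self[of G]
  by (metis funpow_0 mem_Collect_eq subset_refl)

lemma idx_Int:
  assumes "group G" "M1 \<in> sol_quot_index G" "M2 \<in> sol_quot_index G"
  shows "M1 \<inter> M2 \<in> sol_quot_index G"
proof -
  have n1: "M1 \<lhd> G" and n2: "M2 \<lhd> G" using assms by (auto simp: sol_quot_index_def)
  have n: "M1 \<inter> M2 \<lhd> G" using group.normal_subgroup_intersect[OF assms(1) n1 n2] .
  obtain a where a: "(derived G ^^ a) (carrier G) \<subseteq> M1"
    using assms(2) solv_iff[OF assms(1) n1] by (auto simp: sol_quot_index_def)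
  obtain b where b: "(derived G ^^ b) (carrier G) \<subseteq> M2"
    using assms(3) solv_iff[OF assms(1) n2] by (auto simp: sol_quot_index_def)
  have sa: "subgroup ((derived G ^^ a) (carrier G)) G" "subgroup ((derived G ^^ b) (carrier G)) G"
    using group.exp_of_derived_is_subgroup[OF assms(1) group.subgroup_self[OF assms(1)]] by auto
  have "(derived G ^^ (b + a)) (carrier G) \<subseteq> (derived G ^^ a) (carrier G)"
    using derived_sub[OF assms(1) sa(1), of b] by (simp add: funpow_add)
  moreover have "(derived G ^^ (b + a)) (carrier G) \<subseteq> (derived G ^^ b) (carrier G)"
    using derived_sub[OF assms(1) sa(2), of a] by (simp add: funpow_add add.commute)
  ultimately have "(derived G ^^ (b + a)) (carrier G) \<subseteq> M1 \<inter> M2" using a b by blast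
  then show ?thesis using solv_iff[OF assms(1) n] n by (auto simp: sol_quot_index_def)
qed

lemma idx_Inter:
  assumes "group G" "finite J" "J \<subseteq> sol_quot_index G"
  shows "carrier G \<inter> \<Inter>J \<in> sol_quot_index G"
  using assms(2,3)
proof (induction J rule: finite_induct)
  case empty then show ?case using idx_carrier[OF assms(1)] by simp
next
  case (insert N J)
  have "carrier G \<inter> \<Inter>(insert N J) = N \<inter> (carrier G \<inter> \<Inter>J)" by auto
  then show ?case using idx_Int[OF assms(1), of N "carrier G \<inter> \<Inter>J"] insert by simp
qed

lemma PS_coset:
  assumes "f \<in> PS_carrier G" "N \<in> sol_quot_index G"
  shows "\<exists>w\<in>carrier G. f N = N #>\<^bsub>G\<^esub> w"
proof -
  have "f N \<in> carrier (G Mod N)" using assms by (auto simp: PS_carrier_def intro: PiE_mem)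
  then show ?thesis by (auto simp: carrier_Mod RCOSETS_def)
qed

lemma approx:
  assumes "group G" "f \<in> PS_carrier G" "finite J" "J \<subseteq> sol_quot_index G"
  shows "\<exists>w\<in>carrier G. \<forall>N\<in>J. f N = N #>\<^bsub>G\<^esub> w"
proof -
  define M where "M = carrier G \<inter> \<Inter>J"
  have M: "M \<in> sol_quot_index G" unfolding M_def by (rule idx_Inter[OF assms(1,3,4)])
  obtain w where w: "w \<in> carrier G" "f M = M #>\<^bsub>G\<^esub> w" using PS_coset[OF assms(2) M] by blast
  have "f N = N #>\<^bsub>G\<^esub> w" if N: "N \<in> J" for N
  proof -
    have NI: "N \<in> sol_quot_index G" using N assms(4) by blast
    obtain w' where w': "w' \<in> carrier G" "f N = N #>\<^bsub>G\<^esub> w'" using PS_coset[OF assms(2) NI] by blast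
    have "M \<subseteq> N" using N by (auto simp: M_def)
    then have "f M \<subseteq> f N" using assms(2) M NI by (auto simp: PS_carrier_def)
    moreover have "w \<in> f M" using w group.rcos_self[OF assms(1) w(1)] idx_normal[OF M]
      by (simp add: normal_def)
    ultimately have "w \<in> N #>\<^bsub>G\<^esub> w'" using w' by blast
    then have "N #>\<^bsub>G\<^esub> w' = N #>\<^bsub>G\<^esub> w"
      using group.repr_independence[OF assms(1) _ w'(1)] idx_normal[OF NI] by (simp add: normal_def)
    then show ?thesis using w' by simp
  qed
  then show ?thesis using w by blast
qed

lemma density:
  assumes "group G" "openin (PS_topology G) U" "f \<in> U"
  shows "\<exists>w\<in>carrier G. piPS G w \<in> U"
proof -
  obtain V where V: "openin (product_topology (\<lambda>N. discrete_topology (carrier (G Mod N))) (sol_quot_index G)) V"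
      "U = V \<inter> PS_carrier G"
    using assms(2) unfolding PS_topology_def openin_subtopology by blast
  have fV: "f \<in> V" and fP: "f \<in> PS_carrier G" using assms(3) V(2) by auto
  obtain W where W: "finite {N \<in> sol_quot_index G. W N \<noteq> carrier (G Mod N)}"
     "f \<in> Pi\<^sub>E (sol_quot_index G) W" "Pi\<^sub>E (sol_quot_index G) W \<subseteq> V"
    using V(1) fV unfolding openin_product_topology_alt by fastforce
  obtain w where w: "w \<in> carrier G" "\<forall>N\<in>{N \<in> sol_quot_index G. W N \<noteq> carrier (G Mod N)}. f N = N #>\<^bsub>G\<^esub> w"
    using approx[OF assms(1) fP W(1)] by blast
  have "piPS G w \<in> Pi\<^sub>E (sol_quot_index G) W"
  proof
    fix N assume N: "N \<in> sol_quot_index G"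
    show "piPS G w N \<in> W N"
    proof (cases "W N = carrier (G Mod N)")
      case True
      then show ?thesis using pi_in[OF assms(1) w(1)] N by (auto simp: PS_carrier_def piPS_def)
    next
      case False
      then have "f N = N #>\<^bsub>G\<^esub> w" using w(2) N by blast
      moreover have "f N \<in> W N" using W(2) N by (rule PiE_mem)
      ultimately show ?thesis using N by (simp add: piPS_def)
    qed
  next
    fix N assume "N \<notin> sol_quot_index G" then show "piPS G w N = undefined" by (simp add: piPS_def)
  qed
  then have "piPS G w \<in> U" using W(3) V(2) pi_in[OF assms(1) w(1)] by blast
  then show ?thesis using w(1) by blast
qed



definition homsB :: "('a, 'c) monoid_scheme \<Rightarrow> 'a topology \<Rightarrow> ('a \<Rightarrow> bool) set" where
  "homsB G T = {\<phi>. \<phi> \<in> hom G boolG \<and> continuous_map T (discrete_topology UNIV) \<phi> \<and>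
                   (\<forall>x. x \<notin> carrier G \<longrightarrow> \<phi> x = False)}"

lemma transfer:
  assumes h: "h \<in> hom G1 G2" and c: "continuous_map T1 T2 h" and s: "h ` carrier G1 = carrier G2"
    and t: "topspace T1 = carrier G1"
    and cl: "\<And>x y. x \<in> carrier G1 \<Longrightarrow> y \<in> carrier G1 \<Longrightarrow> x \<otimes>\<^bsub>G1\<^esub> y \<in> carrier G1"
    and fin: "finite (homsB G1 T1)"
  shows "card (homsB G2 T2) \<le> card (homsB G1 T1)"
proof -
  define tr where "tr = (\<lambda>\<psi> x. if x \<in> carrier G1 then \<psi> (h x) else False)"
  have "tr \<psi> \<in> homsB G1 T1" if \<psi>: "\<psi> \<in> homsB G2 T2" for \<psi>
  proof -
    have ph: "\<psi> \<in> hom G2 boolG" and pc: "continuous_map T2 (discrete_topology UNIV) \<psi>"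
      using \<psi> by (auto simp: homsB_def)
    have "tr \<psi> \<in> hom G1 boolG"
    proof (rule homI)
      fix x y assume xy: "x \<in> carrier G1" "y \<in> carrier G1"
      have hx: "h x \<in> carrier G2" "h y \<in> carrier G2" using xy s by auto
      have "h (x \<otimes>\<^bsub>G1\<^esub> y) = h x \<otimes>\<^bsub>G2\<^esub> h y" using h xy by (simp add: hom_mult)
      then show "tr \<psi> (x \<otimes>\<^bsub>G1\<^esub> y) = tr \<psi> x \<otimes>\<^bsub>boolG\<^esub> tr \<psi> y"
        using cl[OF xy] xy hom_mult[OF ph hx] by (simp add: tr_def)
    qed simp
    moreover have "continuous_map T1 (discrete_topology UNIV) (tr \<psi>)"
    proof (rule continuous_map_eq)
      show "continuous_map T1 (discrete_topology UNIV) (\<psi> \<circ> h)"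
        by (rule continuous_map_compose[OF c pc])
      fix x assume "x \<in> topspace T1" then show "(\<psi> \<circ> h) x = tr \<psi> x" using t by (simp add: tr_def)
    qed
    ultimately show ?thesis by (simp add: homsB_def tr_def)
  qed
  moreover have "inj_on tr (homsB G2 T2)"
  proof (rule inj_onI)
    fix \<psi> \<psi>' assume a: "\<psi> \<in> homsB G2 T2" "\<psi>' \<in> homsB G2 T2" "tr \<psi> = tr \<psi>'"
    show "\<psi> = \<psi>'"
    proof
      fix y show "\<psi> y = \<psi>' y"
      proof (cases "y \<in> carrier G2")
        case True
        then obtain x where "x \<in> carrier G1" "y = h x" using s by blast
        then show ?thesis using fun_cong[OF a(3), of x] by (simp add: tr_def)
      next
        case False then show ?thesis using a(1,2) by (simp add: homsB_def)
      qed
    qed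
  qed
  ultimately show ?thesis using card_inj_on_le[OF _ _ fin, of tr] by blast
qed

lemma inv_hom:
  assumes h: "h \<in> hom G1 G2" and g: "\<And>y. y \<in> carrier G2 \<Longrightarrow> g y \<in> carrier G1"
    and gh: "\<And>x. x \<in> carrier G1 \<Longrightarrow> g (h x) = x" and hg: "\<And>y. y \<in> carrier G2 \<Longrightarrow> h (g y) = y"
    and cl: "\<And>x y. x \<in> carrier G1 \<Longrightarrow> y \<in> carrier G1 \<Longrightarrow> x \<otimes>\<^bsub>G1\<^esub> y \<in> carrier G1"
  shows "g \<in> hom G2 G1"
proof (rule homI)
  fix x y assume xy: "x \<in> carrier G2" "y \<in> carrier G2"
  have "g (x \<otimes>\<^bsub>G2\<^esub> y) = g (h (g x) \<otimes>\<^bsub>G2\<^esub> h (g y))" using xy hg by simp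
  also have "\<dots> = g (h (g x \<otimes>\<^bsub>G1\<^esub> g y))" using h g xy by (simp add: hom_mult)
  also have "\<dots> = g x \<otimes>\<^bsub>G1\<^esub> g y" using gh cl g xy by simp
  finally show "g (x \<otimes>\<^bsub>G2\<^esub> y) = g x \<otimes>\<^bsub>G1\<^esub> g y" .
qed (use g in auto)



definition vecB :: "nat \<Rightarrow> (((nat \<times> bool) list set \<Rightarrow> (nat \<times> bool) list set) \<Rightarrow> bool) \<Rightarrow> nat \<Rightarrow> bool" where
  "vecB k \<phi> = (\<lambda>i\<in>{..<k}. \<phi> (piPS (free_group k) [(i, True)]))"

lemma gen_in: "i < k \<Longrightarrow> [(i, True)] \<in> carrier (free_group k)"
  by (simp add: free_group_carrier)

lemma phi_pi_hom:
  assumes "\<phi> \<in> hom (PS_group (free_group k)) boolG"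
  shows "(\<lambda>w. \<phi> (piPS (free_group k) w)) \<in> hom (free_group k) boolG"
proof (rule homI)
  fix u v assume uv: "u \<in> carrier (free_group k)" "v \<in> carrier (free_group k)"
  have pc: "piPS (free_group k) u \<in> carrier (PS_group (free_group k))"
           "piPS (free_group k) v \<in> carrier (PS_group (free_group k))"
    using pi_in[OF group_free_group] uv by (auto simp: carrier_PS)
  show "\<phi> (piPS (free_group k) (u \<otimes>\<^bsub>free_group k\<^esub> v)) =
        \<phi> (piPS (free_group k) u) \<otimes>\<^bsub>boolG\<^esub> \<phi> (piPS (free_group k) v)"
    using pi_mult[OF uv] hom_mult[OF assms pc] by simp
qed simp

lemma vecB_inj: "inj_on (vecB k) (homsB (PS_group (free_group k)) (PS_topology (free_group k)))"
proof (rule inj_onI)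
  let ?F = "free_group k"
  fix \<phi> \<phi>' assume a: "\<phi> \<in> homsB (PS_group ?F) (PS_topology ?F)"
     "\<phi>' \<in> homsB (PS_group ?F) (PS_topology ?F)" "vecB k \<phi> = vecB k \<phi>'"
  have h: "\<phi> \<in> hom (PS_group ?F) boolG" "\<phi>' \<in> hom (PS_group ?F) boolG"
    and c: "continuous_map (PS_topology ?F) (discrete_topology UNIV) \<phi>"
           "continuous_map (PS_topology ?F) (discrete_topology UNIV) \<phi>'"
    using a by (auto simp: homsB_def)
  have onpi: "\<phi> (piPS ?F w) = \<phi>' (piPS ?F w)" if w: "w \<in> carrier ?F" for w
  proof -
    have "\<phi> (piPS ?F w) = chi (\<lambda>i. \<phi> (piPS ?F [(i, True)])) w"
      using hom_gen_det[OF phi_pi_hom[OF h(1)] w] by simp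
    also have "\<dots> = chi (\<lambda>i. \<phi>' (piPS ?F [(i, True)])) w"
    proof (rule chi_cong)
      fix i assume "i \<in> fst ` set w"
      then have "i < k" using w by (auto simp: free_group_carrier)
      then show "\<phi> (piPS ?F [(i, True)]) = \<phi>' (piPS ?F [(i, True)])"
        using fun_cong[OF a(3), of i] by (simp add: vecB_def)
    qed
    also have "\<dots> = \<phi>' (piPS ?F w)"
      using hom_gen_det[OF phi_pi_hom[OF h(2)] w] by simp
    finally show ?thesis .
  qed
  show "\<phi> = \<phi>'"
  proof
    fix f show "\<phi> f = \<phi>' f"
    proof (cases "f \<in> PS_carrier ?F")
      case True
      define U where "U = {g \<in> topspace (PS_topology ?F). \<phi> g \<in> {\<phi> f}} \<inter>
                          {g \<in> topspace (PS_topology ?F). \<phi>' g \<in> {\<phi>' f}}"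
      have "openin (PS_topology ?F) U" unfolding U_def
        by (intro openin_Int openin_continuous_map_preimage[OF c(1)] openin_continuous_map_preimage[OF c(2)]) auto
      moreover have "f \<in> U" using True by (simp add: U_def topspace_PS)
      ultimately obtain w where w: "w \<in> carrier ?F" "piPS ?F w \<in> U"
        using density[OF group_free_group] by blast
      then show ?thesis using onpi[OF w(1)] unfolding U_def by force
    next
      case False then show ?thesis using a(1,2) by (simp add: homsB_def carrier_PS)
    qed
  qed
qed

definition Kc :: "nat \<Rightarrow> (nat \<Rightarrow> bool) \<Rightarrow> (nat \<times> bool) list set" where
  "Kc k c = {w \<in> carrier (free_group k). \<not> chi c w}"

lemma Kc_idx: "Kc k c \<in> sol_quot_index (free_group k)"
proof -
  let ?F = "free_group k"
  have gh: "group_hom ?F boolG (chi c)"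
    by (simp add: group_hom_def group_hom_axioms_def group_free_group group_boolG chi_hom)
  have K: "Kc k c = kernel ?F boolG (chi c)" by (simp add: Kc_def kernel_def)
  have n: "Kc k c \<lhd> ?F" using group_hom.normal_kernel[OF gh] K by simp
  have sg: "subgroup (Kc k c) ?F" using group_hom.subgroup_kernel[OF gh] K by simp
  have "derived_set ?F (carrier ?F) \<subseteq> Kc k c"
  proof
    fix x assume "x \<in> derived_set ?F (carrier ?F)"
    then obtain a b where ab: "a \<in> carrier ?F" "b \<in> carrier ?F"
      "x = a \<otimes>\<^bsub>?F\<^esub> b \<otimes>\<^bsub>?F\<^esub> inv\<^bsub>?F\<^esub> a \<otimes>\<^bsub>?F\<^esub> inv\<^bsub>?F\<^esub> b" by blast
    interpret gh: group_hom ?F boolG "chi c" by (rule gh)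
    have "x \<in> carrier ?F" using ab by simp
    moreover have "chi c x = False" using ab by (simp, blast)
    ultimately show "x \<in> Kc k c" by (simp add: Kc_def)
  qed
  then have "(derived ?F ^^ 1) (carrier ?F) \<subseteq> Kc k c"
    using group.generate_subgroup_incl[OF group_free_group _ sg] by (simp add: derived_def)
  then have "solvable (?F Mod Kc k c)" using solv_iff[OF group_free_group n] by blast
  then show ?thesis using n by (simp add: sol_quot_index_def)
qed

definition phic :: "nat \<Rightarrow> (nat \<Rightarrow> bool) \<Rightarrow> ((nat \<times> bool) list set \<Rightarrow> (nat \<times> bool) list set) \<Rightarrow> bool" where
  "phic k c f = (f \<in> PS_carrier (free_group k) \<and> f (Kc k c) \<noteq> Kc k c)"

lemma phic_coset:
  assumes "u \<in> carrier (free_group k)"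
  shows "(Kc k c #>\<^bsub>free_group k\<^esub> u \<noteq> Kc k c) = chi c u"
  using rcos_eq_iff[OF idx_normal[OF Kc_idx] assms] assms by (simp add: Kc_def)

lemma phic_in: "phic k c \<in> homsB (PS_group (free_group k)) (PS_topology (free_group k))"
proof -
  let ?F = "free_group k" and ?K = "Kc k c"
  have KI: "?K \<in> sol_quot_index ?F" by (rule Kc_idx)
  have "phic k c \<in> hom (PS_group ?F) boolG"
  proof (rule homI)
    fix f g assume fg: "f \<in> carrier (PS_group ?F)" "g \<in> carrier (PS_group ?F)"
    then have fg': "f \<in> PS_carrier ?F" "g \<in> PS_carrier ?F" by (auto simp: carrier_PS)
    obtain u where u: "u \<in> carrier ?F" "f ?K = ?K #>\<^bsub>?F\<^esub> u" using PS_coset[OF fg'(1) KI] by blast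
    obtain v where v: "v \<in> carrier ?F" "g ?K = ?K #>\<^bsub>?F\<^esub> v" using PS_coset[OF fg'(2) KI] by blast
    have "(f \<otimes>\<^bsub>PS_group ?F\<^esub> g) ?K = ?K #>\<^bsub>?F\<^esub> (u \<otimes>\<^bsub>?F\<^esub> v)"
      using KI u v normal.rcos_sum[OF idx_normal[OF KI] u(1) v(1)] by (simp add: mult_PS)
    moreover have "u \<otimes>\<^bsub>?F\<^esub> v \<in> carrier ?F" using u v group.subgroup_self[OF group_free_group]
      by (simp add: subgroup.m_closed)
    moreover have "chi c (u \<otimes>\<^bsub>?F\<^esub> v) = (chi c u \<noteq> chi c v)"
      using hom_mult[OF chi_hom u(1) v(1)] by simp
    ultimately show "phic k c (f \<otimes>\<^bsub>PS_group ?F\<^esub> g) = phic k c f \<otimes>\<^bsub>boolG\<^esub> phic k c g"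
      using PS_mult_closed[OF fg'] fg' u v phic_coset by (simp add: phic_def)
  qed simp
  moreover have "continuous_map (PS_topology ?F) (discrete_topology UNIV) (phic k c)"
  proof (rule continuous_map_eq)
    have "continuous_map (product_topology (\<lambda>N. discrete_topology (carrier (?F Mod N))) (sol_quot_index ?F))
            (discrete_topology UNIV) ((\<lambda>S. S \<noteq> ?K) \<circ> (\<lambda>f. f ?K))"
      by (rule continuous_map_compose[OF continuous_map_product_projection[OF KI]]) simp
    then show "continuous_map (PS_topology ?F) (discrete_topology UNIV) ((\<lambda>S. S \<noteq> ?K) \<circ> (\<lambda>f. f ?K))"
      unfolding PS_topology_def by (rule continuous_map_from_subtopology)
    fix f assume "f \<in> topspace (PS_topology ?F)"
    then show "((\<lambda>S. S \<noteq> ?K) \<circ> (\<lambda>f. f ?K)) f = phic k c f" by (simp add: topspace_PS phic_def)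
  qed
  ultimately show ?thesis by (simp add: homsB_def phic_def carrier_PS)
qed

lemma vecB_phic: "c \<in> (\<Pi>\<^sub>E i\<in>{..<k}. (UNIV :: bool set)) \<Longrightarrow> vecB k (phic k c) = c"
proof
  fix i assume c: "c \<in> (\<Pi>\<^sub>E i\<in>{..<k}. (UNIV :: bool set))"
  show "vecB k (phic k c) i = c i"
  proof (cases "i < k")
    case True
    have "phic k c (piPS (free_group k) [(i, True)]) = chi c [(i, True)]"
      using pi_in[OF group_free_group gen_in[OF True]] phic_coset[OF gen_in[OF True]] Kc_idx
      by (simp add: phic_def piPS_def)
    then show ?thesis using True by (simp add: vecB_def)
  next
    case False then show ?thesis using c by (simp add: vecB_def PiE_def extensional_def)
  qed
qed

lemma card_homsB: "card (homsB (PS_group (free_group k)) (PS_topology (free_group k))) = 2 ^ k"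
  and fin_homsB: "finite (homsB (PS_group (free_group k)) (PS_topology (free_group k)))"
proof -
  let ?H = "homsB (PS_group (free_group k)) (PS_topology (free_group k))"
  let ?P = "\<Pi>\<^sub>E i\<in>{..<k}. (UNIV :: bool set)"
  have "bij_betw (vecB k) ?H ?P"
    unfolding bij_betw_def
  proof
    show "inj_on (vecB k) ?H" by (rule vecB_inj)
    show "vecB k ` ?H = ?P"
    proof
      show "vecB k ` ?H \<subseteq> ?P" by (auto simp: vecB_def)
      show "?P \<subseteq> vecB k ` ?H"
      proof
        fix c assume "c \<in> ?P"
        then show "c \<in> vecB k ` ?H" using vecB_phic phic_in by (metis image_eqI)
      qed
    qed
  qed
  moreover have "finite ?P" by (simp add: finite_PiE)
  moreover have "card ?P = 2 ^ k" by (simp add: card_PiE)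
  ultimately show "card ?H = 2 ^ k" "finite ?H"
    by (metis bij_betw_same_card, metis bij_betw_finite)
qed



lemma iso_card_le:
  assumes h: "h \<in> iso (PS_group (free_group k)) (PS_group (free_group l))"
    and hm: "homeomorphic_map (PS_topology (free_group k)) (PS_topology (free_group l)) h"
  shows "(2::nat) ^ l \<le> 2 ^ k \<and> (2::nat) ^ k \<le> 2 ^ l"
proof -
  let ?Pk = "PS_group (free_group k)" and ?Pl = "PS_group (free_group l)"
  let ?Tk = "PS_topology (free_group k)" and ?Tl = "PS_topology (free_group l)"
  obtain g where g: "homeomorphic_maps ?Tk ?Tl h g" using hm homeomorphic_map_maps by blast
  have hc: "continuous_map ?Tk ?Tl h" and gc: "continuous_map ?Tl ?Tk g"
    and gh: "\<And>x. x \<in> carrier ?Pk \<Longrightarrow> g (h x) = x" and hg: "\<And>y. y \<in> carrier ?Pl \<Longrightarrow> h (g y) = y"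
    using g by (auto simp: homeomorphic_maps_def topspace_PS carrier_PS)
  have hh: "h \<in> hom ?Pk ?Pl" and hb: "bij_betw h (carrier ?Pk) (carrier ?Pl)"
    using h by (auto simp: iso_def)
  have hs: "h ` carrier ?Pk = carrier ?Pl" using hb by (simp add: bij_betw_def)
  have gin: "\<And>y. y \<in> carrier ?Pl \<Longrightarrow> g y \<in> carrier ?Pk"
    using gc by (auto simp: continuous_map_def topspace_PS carrier_PS)
  have clk: "\<And>x y. x \<in> carrier ?Pk \<Longrightarrow> y \<in> carrier ?Pk \<Longrightarrow> x \<otimes>\<^bsub>?Pk\<^esub> y \<in> carrier ?Pk"
    by (simp add: carrier_PS PS_mult_closed)
  have cll: "\<And>x y. x \<in> carrier ?Pl \<Longrightarrow> y \<in> carrier ?Pl \<Longrightarrow> x \<otimes>\<^bsub>?Pl\<^esub> y \<in> carrier ?Pl"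
    by (simp add: carrier_PS PS_mult_closed)
  have gh': "g \<in> hom ?Pl ?Pk" by (rule inv_hom[OF hh gin gh hg clk])
  have gs: "g ` carrier ?Pl = carrier ?Pk"
  proof
    show "g ` carrier ?Pl \<subseteq> carrier ?Pk" using gin by blast
    show "carrier ?Pk \<subseteq> g ` carrier ?Pl"
    proof
      fix x assume "x \<in> carrier ?Pk"
      then show "x \<in> g ` carrier ?Pl" using gh[of x] hs by (metis image_eqI)
    qed
  qed
  have "card (homsB ?Pl ?Tl) \<le> card (homsB ?Pk ?Tk)"
    by (rule transfer[OF hh hc hs _ clk fin_homsB]) (simp add: topspace_PS carrier_PS)
  moreover have "card (homsB ?Pk ?Tk) \<le> card (homsB ?Pl ?Tl)"
    by (rule transfer[OF gh' gc gs _ cll fin_homsB]) (simp add: topspace_PS carrier_PS)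
  ultimately show ?thesis by (simp add: card_homsB)
qed

theorem mainTheorem7:
  fixes k l :: nat
  assumes "2 \<le> k" and "2 \<le> l" and "k \<noteq> l"
  shows "\<not> top_group_iso (PS_group (free_group k)) (PS_topology (free_group k))
                         (PS_group (free_group l)) (PS_topology (free_group l))"
proof
  assume "top_group_iso (PS_group (free_group k)) (PS_topology (free_group k))
                         (PS_group (free_group l)) (PS_topology (free_group l))"
  then obtain h where "h \<in> iso (PS_group (free_group k)) (PS_group (free_group l))"
    "homeomorphic_map (PS_topology (free_group k)) (PS_topology (free_group l)) h"
    by (auto simp: top_group_iso_def)
  then have "(2::nat) ^ l \<le> 2 ^ k \<and> (2::nat) ^ k \<le> 2 ^ l" by (rule iso_card_le)
  then have "(2::nat) ^ k = 2 ^ l" by simp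
  then have "k = l" by simp
  then show False using assms(3) by simp
qed


end
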